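(* For any signature $\Sigma$ and any reduced $\Sigma$-forest $f$, the coproduct of $\mathbf N(T(\Sigma))$ satisfies $$\Delta E_f=\sum_{I_1,I_2\subseteq[\deg f]}[(I_1,I_2)\text{ is } f\text{-admissible}]\;E_{f(I_1)}\otimes E_{f(I_2)}.$$
   Context: $\mathbb K$ is a field of characteristic zero, $\mathbb N=\{0,1,2,\dots\}$, $[n]=\{1,\dots,n\}$, and $[P]$ is $1$ if $P$ holds and $0$ otherwise. A signature is a set $\Sigma$ with an arity map $|\cdot|:\Sigma\to\mathbb N$; $\Sigma(n)$ is the set of elements of arity $n$. A $\Sigma$-term is either the leaf $\bot$ or $s(t_1,\dots,t_n)$ with $s\in\Sigma(n)$ and $\Sigma$-terms $t_i$ (a planar rooted tree with internal nodes with $n$ children decorated by $\Sigma(n)$); its degree is its number of internal nodes, its arity $|t|$ its number of leaves. $T(\Sigma)$ is the free nonsymmetric operad on $\Sigma$: $t[t_1,\dots,t_{|t|}]$ grafts the root of $t_i$ onto the $i$-th leaf of $t$ (leaves numbered left to right), unit $\bot$. A $\Sigma$-forest is a finite word of terms, of degree the sum of the degrees; it is reduced if no term is $\bot$; $\mathrm{rd}(w)$ deletes the terms equal to $\bot$ from a word $w$ of terms. The internal nodes of a forest $f$ are identified with $1,\dots,\deg f$ by the left-to-right preorder traversal (terms taken from left to right). For a reduced forest $f$ and $I\subseteq[\deg f]$, the restriction $f(I)$ is the reduced forest obtained by keeping only the internal nodes of $f$ that are in $I$ (with their decorations and arities) and the edges between them: every child position of a kept node which is occupied in $f$ by a leaf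 or by a node not in $I$ becomes a leaf, each kept node whose parent is not kept (or which is a root) becomes the root of a new term, and the resulting terms are ordered by the preorder rank in $f$ of their roots. In particular $f(\emptyset)=\epsilon$. A pair $(I_1,I_2)$ is $f$-admissible if $I_1\sqcup I_2=[\deg f]$, every ancestor of a node in $I_1$ is in $I_1$, and every descendant of a node in $I_2$ is in $I_2$. $\mathbf N(T(\Sigma))$ is the $\mathbb K$-vector space with basis $E_f$, $f$ reduced $\Sigma$-forest, with product $E_{f_1}E_{f_2}=E_{f_1f_2}$ and coproduct the unique algebra morphism with $\Delta E_t=\sum E_{\mathrm{rd}(t')}\otimes E_{\mathrm{rd}(t_1\cdots t_{|t'|})}$ for terms $t\ne\bot$, summed over all $t',t_1,\dots,t_{|t'|}\in T(\Sigma)$ with $t=t'[t_1,\dots,t_{|t'|}]$ (with $E_{\mathrm{rd}(\bot)}=E_\epsilon$). *)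

theory Defs
  imports Main
begin

text \<open>A signature is given by a carrier set Sig of symbols of type 's together with an
arity map ar.  A Sigma-term is Leaf (the leaf bot) or Node s ts.\<close>

datatype 's sterm = Leaf | Node 's "'s sterm list"

type_synonym 's forest = "'s sterm list"

fun wf_term :: "'s set \<Rightarrow> ('s \<Rightarrow> nat) \<Rightarrow> 's sterm \<Rightarrow> bool" where
  "wf_term Sig ar Leaf = True"
| "wf_term Sig ar (Node s ts) = (s \<in> Sig \<and> length ts = ar s \<and> (\<forall>t\<in>set ts. wf_term Sig ar t))"

fun leaves :: "'s sterm \<Rightarrow> nat" where
  "leaves Leaf = 1"
| "leaves (Node s ts) = sum_list (map leaves ts)"

fun graft :: "'s sterm \<Rightarrow> 's sterm list \<Rightarrow> 's sterm"
and graft_list :: "'s sterm list \<Rightarrow> 's sterm list \<Rightarrow> 's sterm list" where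
  "graft Leaf us = hd us"
| "graft (Node s cs) us = Node s (graft_list cs us)"
| "graft_list [] us = []"
| "graft_list (c # cs) us = graft c (take (leaves c) us) # graft_list cs (drop (leaves c) us)"

definition reduced :: "'s forest \<Rightarrow> bool" where
  "reduced f \<longleftrightarrow> (\<forall>t\<in>set f. t \<noteq> Leaf)"

definition rd :: "'s forest \<Rightarrow> 's forest" where
  "rd w = filter (\<lambda>t. t \<noteq> Leaf) w"

fun nodes_term :: "'s sterm \<Rightarrow> nat list list"
and nodes_list :: "nat \<Rightarrow> 's sterm list \<Rightarrow> nat list list" where
  "nodes_term Leaf = []"
| "nodes_term (Node s cs) = [] # nodes_list 0 cs"
| "nodes_list j [] = []"
| "nodes_list j (c # cs) = map (Cons j) (nodes_term c) @ nodes_list (Suc j) cs"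

text \<open>Internal nodes of a forest as pairs (term index, path), in left-to-right preorder;
the node with preorder number k (1-based) is  forest_nodes f ! (k - 1).\<close>
definition forest_nodes :: "'s forest \<Rightarrow> (nat \<times> nat list) list" where
  "forest_nodes f = concat (map (\<lambda>i. map (\<lambda>p. (i, p)) (nodes_term (f ! i))) [0..<length f])"

definition deg :: "'s forest \<Rightarrow> nat" where
  "deg f = length (forest_nodes f)"

definition node_num :: "'s forest \<Rightarrow> nat \<Rightarrow> nat \<times> nat list \<Rightarrow> bool" where
  "node_num f k x \<longleftrightarrow> 1 \<le> k \<and> k \<le> deg f \<and> forest_nodes f ! (k - 1) = x"

definition kept :: "'s forest \<Rightarrow> nat set \<Rightarrow> nat \<times> nat list \<Rightarrow> bool" where
  "kept f I x \<longleftrightarrow> (\<exists>k\<in>I. node_num f k x)"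

primrec subtree :: "'s sterm \<Rightarrow> nat list \<Rightarrow> 's sterm" where
  "subtree t [] = t"
| "subtree t (j # p) = (case t of Leaf \<Rightarrow> Leaf | Node s cs \<Rightarrow> subtree (cs ! j) p)"

text \<open>The term rooted at a kept node, keeping exactly the kept descendants connected to it
(K is the keep-predicate on paths relative to the node); other child positions become leaves.\<close>
fun restr_in :: "'s sterm \<Rightarrow> (nat list \<Rightarrow> bool) \<Rightarrow> 's sterm"
and restr_list :: "nat \<Rightarrow> 's sterm list \<Rightarrow> (nat list \<Rightarrow> bool) \<Rightarrow> 's sterm list" where
  "restr_in Leaf K = Leaf"
| "restr_in (Node s cs) K = Node s (restr_list 0 cs K)"
| "restr_list j [] K = []"
| "restr_list j (c # cs) K =
     (if K [j] then restr_in c (\<lambda>q. K (j # q)) else Leaf) # restr_list (Suc j) cs K"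

text \<open>The restriction f(I): one new term for each kept node that is a root or whose parent
is not kept, ordered by preorder rank of these roots.\<close>
definition restr :: "'s forest \<Rightarrow> nat set \<Rightarrow> 's forest" where
  "restr f I =
     map (\<lambda>(i, p). restr_in (subtree (f ! i) p) (\<lambda>q. kept f I (i, p @ q)))
       (filter (\<lambda>(i, p). kept f I (i, p) \<and> (p = [] \<or> \<not> kept f I (i, butlast p)))
          (forest_nodes f))"

definition ancestor :: "'s forest \<Rightarrow> nat \<Rightarrow> nat \<Rightarrow> bool" where
  "ancestor f a b \<longleftrightarrow> (\<exists>i p q. node_num f a (i, p) \<and> node_num f b (i, q) \<and> (\<exists>r. r \<noteq> [] \<and> q = p @ r))"

definition admissible :: "'s forest \<Rightarrow> nat set \<Rightarrow> nat set \<Rightarrow> bool" where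
  "admissible f I1 I2 \<longleftrightarrow>
     I1 \<union> I2 = {1..deg f} \<and> I1 \<inter> I2 = {} \<and>
     (\<forall>a b. b \<in> I1 \<and> ancestor f a b \<longrightarrow> a \<in> I1) \<and>
     (\<forall>a b. a \<in> I2 \<and> ancestor f a b \<longrightarrow> b \<in> I2)"

text \<open>Elements of N(T(Sigma)) (x) N(T(Sigma)) are represented by their coefficient functions
on the basis E_u (x) E_v (only finitely supported ones occur).\<close>
type_synonym ('s, 'k) tensor = "'s forest \<times> 's forest \<Rightarrow> 'k"

definition tbasis :: "'s forest \<Rightarrow> 's forest \<Rightarrow> ('s, 'k::zero_neq_one) tensor" where
  "tbasis u v = (\<lambda>x. if x = (u, v) then 1 else 0)"

text \<open>Product on the tensor square: (E_u1 (x) E_v1)(E_u2 (x) E_v2) = E_(u1 u2) (x) E_(v1 v2).\<close>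
definition tmul :: "('s, 'k::comm_semiring_1) tensor \<Rightarrow> ('s, 'k) tensor \<Rightarrow> ('s, 'k) tensor" where
  "tmul A B = (\<lambda>(u, v). \<Sum>i\<le>length u. \<Sum>j\<le>length v.
                 A (take i u, take j v) * B (drop i u, drop j v))"

definition tone :: "('s, 'k::zero_neq_one) tensor" where
  "tone = tbasis [] []"

definition DeltaT :: "'s set \<Rightarrow> ('s \<Rightarrow> nat) \<Rightarrow> 's sterm \<Rightarrow> ('s, 'k::comm_semiring_1) tensor" where
  "DeltaT Sig ar t = (\<lambda>(u, v). of_nat (card
     {(t', ts). wf_term Sig ar t' \<and> (\<forall>x\<in>set ts. wf_term Sig ar x) \<and>
        length ts = leaves t' \<and> graft t' ts = t \<and> rd [t'] = u \<and> rd ts = v}))"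

text \<open>The coproduct is the algebra morphism extending DeltaT: Delta E_(t1...tn) is the product
of the Delta E_ti.\<close>
definition Delta :: "'s set \<Rightarrow> ('s \<Rightarrow> nat) \<Rightarrow> 's forest \<Rightarrow> ('s, 'k::comm_semiring_1) tensor" where
  "Delta Sig ar f = foldr (\<lambda>t acc. tmul (DeltaT Sig ar t) acc) f tone"

end

theory Submission
  imports Defs
begin


lemma upt0_Suc: "[0..<Suc n] = 0 # map Suc [0..<n]"
  by (simp add: map_Suc_upt upt_conv_Cons del: upt_Suc)

lemma nodes_list_conv:
  "nodes_list j cs = concat (map (\<lambda>k. map (Cons (j+k)) (nodes_term (cs!k))) [0..<length cs])"
proof (induction cs arbitrary: j)
  case Nil then show ?case by simp
next
  case (Cons c cs)
  show ?case using Cons by (simp add: comp_def upt0_Suc del: upt_Suc)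
qed

lemma nodes_Node: "nodes_term (Node s cs) = [] # concat (map (\<lambda>k. map (Cons k) (nodes_term (cs!k))) [0..<length cs])"
  by (simp add: nodes_list_conv)

lemma nil_nodes: "[] \<in> set (nodes_term t) \<longleftrightarrow> t \<noteq> Leaf"
  by (cases t) (auto simp: nodes_Node)

lemma cons_nodes: "k # q \<in> set (nodes_term t) \<longleftrightarrow> (\<exists>s cs. t = Node s cs \<and> k < length cs \<and> q \<in> set (nodes_term (cs!k)))"
  by (cases t) (auto simp: nodes_list_conv)

lemma nodes_prefix: "p @ r \<in> set (nodes_term t) \<Longrightarrow> p \<in> set (nodes_term t)"
proof (induction p arbitrary: t)
  case Nil then show ?case by (cases t) (auto simp: nodes_list_conv)
next
  case (Cons k p) then show ?case by (auto simp: cons_nodes)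
qed

lemma distinct_concat_map:
  assumes "distinct xs" "\<And>x. x \<in> set xs \<Longrightarrow> distinct (g x)"
    "\<And>x y. x \<in> set xs \<Longrightarrow> y \<in> set xs \<Longrightarrow> x \<noteq> y \<Longrightarrow> set (g x) \<inter> set (g y) = {}"
  shows "distinct (concat (map g xs))"
  using assms
proof (induction xs)
  case Nil then show ?case by simp
next
  case (Cons a xs)
  then show ?case by (fastforce)
qed

lemma distinct_nodes: "distinct (nodes_term t)"
proof (induction t)
  case Leaf then show ?case by simp
next
  case (Node s cs)
  show ?case unfolding nodes_Node
    apply simp
    apply (intro conjI distinct_concat_map)
    using Node by (auto simp: distinct_map)
qed



function upper :: "'s sterm \<Rightarrow> nat list set \<Rightarrow> 's sterm" where
  "upper Leaf S = Leaf"
| "upper (Node s cs) S = (if [] \<in> S then Node s (map (\<lambda>k. upper (cs!k) {q. k#q \<in> S}) [0..<length cs]) else Leaf)"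
  by pat_completeness auto
termination
  apply (relation "measure (\<lambda>(t,S). size t)")
  apply auto
  by (metis le_imp_less_Suc nth_mem order_refl size_list_estimation')

function lower :: "'s sterm \<Rightarrow> nat list set \<Rightarrow> 's sterm list" where
  "lower Leaf S = [Leaf]"
| "lower (Node s cs) S = (if [] \<in> S then concat (map (\<lambda>k. lower (cs!k) {q. k#q \<in> S}) [0..<length cs]) else [Node s cs])"
  by pat_completeness auto
termination
  apply (relation "measure (\<lambda>(t,S). size t)")
  apply auto
  by (metis le_imp_less_Suc nth_mem order_refl size_list_estimation')



definition upc :: "nat list set \<Rightarrow> bool" where
  "upc S \<longleftrightarrow> (\<forall>p r. p @ r \<in> S \<longrightarrow> p \<in> S)"

lemma upc_shift: "upc S \<Longrightarrow> upc {q. k # q \<in> S}"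
  unfolding upc_def by (metis append_Cons mem_Collect_eq)

lemma upc_empty: assumes "upc S" "[] \<notin> S" shows "S = {}"
proof (rule ccontr)
  assume "S \<noteq> {}" then obtain x where "x \<in> S" by blast
  then have "[] @ x \<in> S" by simp
  with assms show False unfolding upc_def by blast
qed

lemma graft_list_concat:
  "(\<And>k. k \<in> set xs \<Longrightarrow> length (B k) = leaves (A k)) \<Longrightarrow>
   graft_list (map A xs) (concat (map B xs)) = map (\<lambda>k. graft (A k) (B k)) xs"
  by (induction xs) auto

lemma upper_lower_graft:
  "graft (upper t S) (lower t S) = t \<and> length (lower t S) = leaves (upper t S)"
proof (induction t arbitrary: S)
  case Leaf then show ?case by simp
next
  case (Node s cs)
  show ?case
  proof (cases "[] \<in> S")
    case True
    have IH: "\<And>k. k \<in> set [0..<length cs] \<Longrightarrow>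
      graft (upper (cs!k) {q. k#q \<in> S}) (lower (cs!k) {q. k#q \<in> S}) = cs!k \<and>
      length (lower (cs!k) {q. k#q \<in> S}) = leaves (upper (cs!k) {q. k#q \<in> S})"
      using Node by simp
    have "graft_list (map (\<lambda>k. upper (cs!k) {q. k#q \<in> S}) [0..<length cs])
       (concat (map (\<lambda>k. lower (cs!k) {q. k#q \<in> S}) [0..<length cs])) =
       map (\<lambda>k. cs!k) [0..<length cs]"
      using IH by (subst graft_list_concat) auto
    also have "\<dots> = cs" by (simp add: map_nth)
    moreover have "(\<Sum>x\<leftarrow>[0..<length cs]. length (lower (cs ! x) {q. x # q \<in> S})) =
        (\<Sum>x\<leftarrow>[0..<length cs]. leaves (upper (cs ! x) {q. x # q \<in> S}))"
      using IH by (intro arg_cong[where f=sum_list] map_cong) auto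
    ultimately show ?thesis using True
      by (simp add: length_concat comp_def)
  qed simp
qed

lemma wf_upper_lower:
  "wf_term Sig ar t \<Longrightarrow> wf_term Sig ar (upper t S) \<and> (\<forall>x\<in>set (lower t S). wf_term Sig ar x)"
proof (induction t arbitrary: S)
  case Leaf then show ?case by simp
next
  case (Node s cs)
  then show ?case by (auto simp: list_all_iff) (metis nth_mem)+
qed

lemma cons_nodes_Node: "k # q \<in> set (nodes_term (Node s cs)) \<longleftrightarrow> k < length cs \<and> q \<in> set (nodes_term (cs!k))"
  by (subst cons_nodes) auto

lemma nodes_upper:
  "S \<subseteq> set (nodes_term t) \<Longrightarrow> upc S \<Longrightarrow> set (nodes_term (upper t S)) = S"
proof (induction t arbitrary: S)
  case Leaf then have "S = {}" by (simp only: nodes_term.simps list.set(1) subset_empty)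
  then show ?case by simp
next
  case (Node s cs)
  show ?case
  proof (cases "[] \<in> S")
    case False
    then have "S = {}" using upc_empty[OF Node.prems(2)] by blast
    then show ?thesis by simp
  next
    case True
    have IH: "\<And>k. k < length cs \<Longrightarrow> set (nodes_term (upper (cs!k) {q. k#q \<in> S})) = {q. k#q \<in> S}"
    proof -
      fix k assume k: "k < length cs"
      show "set (nodes_term (upper (cs!k) {q. k#q \<in> S})) = {q. k#q \<in> S}"
        apply (rule Node.IH)
        using k apply simp
        using Node.prems(1) k apply (blast dest: subsetD cons_nodes_Node[THEN iffD1])
        using Node.prems(2) upc_shift by blast
    qed
    show ?thesis
    proof (rule set_eqI)
      fix p show "p \<in> set (nodes_term (upper (Node s cs) S)) \<longleftrightarrow> p \<in> S"
      proof (cases p)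
        case Nil then show ?thesis using True by (simp add: nil_nodes)
      next
        case (Cons k q)
        have 1: "k # q \<in> S \<Longrightarrow> k < length cs" by (metis Node.prems(1) subsetD cons_nodes_Node)
        have "p \<in> set (nodes_term (upper (Node s cs) S)) \<longleftrightarrow>
           k < length cs \<and> q \<in> set (nodes_term (upper (cs!k) {q. k#q \<in> S}))"
          using True Cons by (simp only: upper.simps if_True cons_nodes_Node) (simp cong: conj_cong)
        also have "\<dots> \<longleftrightarrow> k # q \<in> S" using IH[of k] 1 by blast
        finally show ?thesis unfolding Cons by blast
      qed
    qed
  qed
qed

lemma split_concat:
  "length ts = sum_list (map leaves cs') \<Longrightarrow>
   \<exists>yss. length yss = length cs' \<and> (\<forall>k<length cs'. length (yss!k) = leaves (cs'!k)) \<and> ts = concat yss"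
proof (induction cs' arbitrary: ts)
  case Nil then show ?case by simp
next
  case (Cons c cs')
  obtain yss where "length yss = length cs'" "\<forall>k<length cs'. length (yss!k) = leaves (cs'!k)"
    "drop (leaves c) ts = concat yss"
    using Cons.IH[of "drop (leaves c) ts"] Cons.prems by auto
  then show ?case
    apply (intro exI[of _ "take (leaves c) ts # yss"])
    using Cons.prems by (auto simp: nth_Cons split: nat.splits) (metis append_take_drop_id)
qed

lemma graft_list_concat2:
  "length yss = length cs' \<Longrightarrow> (\<forall>k<length cs'. length (yss!k) = leaves (cs'!k)) \<Longrightarrow>
   graft_list cs' (concat yss) = map (\<lambda>k. graft (cs'!k) (yss!k)) [0..<length cs']"
proof (induction cs' arbitrary: yss)
  case Nil then show ?case by simp
next
  case (Cons c cs')
  then obtain y ys where yss: "yss = y # ys" by (cases yss) auto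
  have "graft_list cs' (concat ys) = map (\<lambda>k. graft (cs'!k) (ys!k)) [0..<length cs']"
    using Cons yss by force
  then show ?case using Cons.prems yss by (auto simp: upt0_Suc comp_def simp del: upt_Suc)
qed



lemma cons_nodes_list0: "k # q \<in> set (nodes_list 0 cs) \<longleftrightarrow> k < length cs \<and> q \<in> set (nodes_term (cs!k))"
  using cons_nodes_Node[of k q undefined cs] by simp

lemma upper_lower_surj:
  "length ts = leaves t' \<Longrightarrow> graft t' ts = t \<Longrightarrow>
   upper t (set (nodes_term t')) = t' \<and> lower t (set (nodes_term t')) = ts \<and>
   set (nodes_term t') \<subseteq> set (nodes_term t)"
proof (induction t arbitrary: t' ts)
  case Leaf
  show ?case
  proof (cases t')
    case Leaf
    with Leaf.prems show ?thesis by (cases ts) auto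
  next
    case (Node s' cs')
    with Leaf.prems show ?thesis by simp
  qed
next
  case (Node s cs)
  note prems = Node.prems and IHo = Node.IH
  show ?case
  proof (cases t')
    case Leaf
    with prems have "ts = [Node s cs]" by (cases ts) auto
    with Leaf show ?thesis by simp
  next
    case (Node s' cs')
    note Node2 = this
    obtain yss where y: "length yss = length cs'" "\<forall>k<length cs'. length (yss!k) = leaves (cs'!k)"
      "ts = concat yss"
      using split_concat[of ts cs'] prems Node2 by auto
    have ss: "s' = s" and cs: "cs = graft_list cs' ts" using prems Node2 by auto
    have cs2: "cs = map (\<lambda>k. graft (cs'!k) (yss!k)) [0..<length cs']"
      using cs y graft_list_concat2 by metis
    have len: "length cs = length cs'" using cs2 by simp
    have csk: "\<And>k. k < length cs' \<Longrightarrow> cs!k = graft (cs'!k) (yss!k)" using cs2 by simp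
    have IH: "\<And>k. k < length cs' \<Longrightarrow>
       upper (cs!k) (set (nodes_term (cs'!k))) = cs'!k \<and> lower (cs!k) (set (nodes_term (cs'!k))) = yss!k \<and>
       set (nodes_term (cs'!k)) \<subseteq> set (nodes_term (cs!k))"
    proof -
      fix k assume k: "k < length cs'"
      show "upper (cs!k) (set (nodes_term (cs'!k))) = cs'!k \<and> lower (cs!k) (set (nodes_term (cs'!k))) = yss!k \<and>
       set (nodes_term (cs'!k)) \<subseteq> set (nodes_term (cs!k))"
        apply (rule IHo)
        using k len apply simp
        using k y apply simp
        using k csk apply simp
        done
    qed
    define S where "S = set (nodes_term t')"
    have nil: "[] \<in> S" unfolding S_def Node2 by (simp add: nil_nodes)
    have Sk: "\<And>k. k < length cs' \<Longrightarrow> {q. k # q \<in> S} = set (nodes_term (cs'!k))"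
      unfolding S_def Node2 by (simp add: cons_nodes_list0)
    have "upper (Node s cs) S = Node s (map (\<lambda>k. upper (cs!k) {q. k#q \<in> S}) [0..<length cs])"
      using nil by simp
    also have "\<dots> = Node s (map (\<lambda>k. cs'!k) [0..<length cs'])"
      using IH Sk len by (intro arg_cong[where f="Node s"] map_cong) auto
    also have "\<dots> = t'" using Node2 ss by (simp add: map_nth)
    finally have 1: "upper (Node s cs) S = t'" .
    have "lower (Node s cs) S = concat (map (\<lambda>k. lower (cs!k) {q. k#q \<in> S}) [0..<length cs])"
      using nil by simp
    also have "\<dots> = concat (map (\<lambda>k. yss!k) [0..<length yss])"
      using IH Sk len y(1) by (intro arg_cong[where f="concat"] map_cong) auto
    also have "\<dots> = ts" using y(3) by (simp add: map_nth)
    finally have 2: "lower (Node s cs) S = ts" .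
    have 3: "S \<subseteq> set (nodes_term (Node s cs))"
    proof
      fix p assume p: "p \<in> S"
      show "p \<in> set (nodes_term (Node s cs))"
      proof (cases p)
        case Nil then show ?thesis by (simp add: nil_nodes)
      next
        case (Cons k q)
        with p have "k < length cs'" "q \<in> set (nodes_term (cs'!k))"
          unfolding S_def Node2 by (simp_all add: cons_nodes_list0)
        then show ?thesis using Cons IH len cons_nodes_Node by (metis subsetD)
      qed
    qed
    show ?thesis using 1 2 3 unfolding S_def by blast
  qed
qed



lemma restr_upper:
  fixes t :: "'s sterm" and cs :: "'s sterm list"
  shows "K [] \<longrightarrow> restr_in t K = upper t {q. K q}"
  and "restr_list j cs K = map (\<lambda>k. upper (cs!k) {q. K ((j+k)#q)}) [0..<length cs]"
proof (induction t K and j cs K rule: restr_in_restr_list.induct)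
  case (1 K) then show ?case by simp
next
  case (2 s cs K) then show ?case by (simp add: comp_def)
next
  case (3 j K) then show ?case by simp
next
  case (4 j c cs K)
  have h: "(if K [j] then restr_in c (\<lambda>q. K (j # q)) else Leaf) = upper c {q. K (j#q)}"
  proof (cases "K [j]")
    case True then show ?thesis using 4 by simp
  next
    case False then show ?thesis by (cases c) auto
  qed
  show ?case using 4 h by (simp add: upt0_Suc comp_def del: upt_Suc)
qed

lemma restr_id:
  fixes t :: "'s sterm" and cs :: "'s sterm list"
  shows "(\<forall>q\<in>set (nodes_term t). K q) \<Longrightarrow> restr_in t K = t"
  and "(\<forall>q\<in>set (nodes_list j cs). K q) \<Longrightarrow> restr_list j cs K = cs"
proof (induction t K and j cs K rule: restr_in_restr_list.induct)
  case (1 K) then show ?case by simp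
next
  case (2 s cs K) then show ?case by simp
next
  case (3 j K) then show ?case by simp
next
  case (4 j c cs K)
  have h: "(if K [j] then restr_in c (\<lambda>q. K (j # q)) else Leaf) = c"
  proof (cases c)
    case Leaf then show ?thesis by simp
  next
    case (Node s' cs')
    then have "[j] \<in> set (nodes_list j (c # cs))" by simp
    then have "K [j]" using 4 by blast
    moreover have "restr_in c (\<lambda>q. K (j # q)) = c" using 4 \<open>K [j]\<close> by simp
    ultimately show ?thesis by simp
  qed
  show ?case using 4 h by simp
qed



lemma rd_concat: "rd (concat xs) = concat (map rd xs)"
  unfolding rd_def by (induct xs) auto

lemma butlast_Cons_iff:
  assumes "[] \<in> S"
  shows "(k # q \<notin> S \<and> (k # q = [] \<or> butlast (k # q) \<in> S)) \<longleftrightarrow>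
         (q \<notin> {q. k#q \<in> S} \<and> (q = [] \<or> butlast q \<in> {q. k#q \<in> S}))"
  using assms by (cases q) auto

lemma rd_lower:
  "upc S \<Longrightarrow> rd (lower t S) =
     map (subtree t) (filter (\<lambda>p. p \<notin> S \<and> (p = [] \<or> butlast p \<in> S)) (nodes_term t))"
proof (induction t arbitrary: S)
  case Leaf then show ?case by (simp add: rd_def)
next
  case (Node s cs)
  define P where "P = (\<lambda>p. p \<notin> S \<and> (p = [] \<or> butlast p \<in> S))"
  define N where "N = (\<lambda>k. nodes_term (cs!k))"
  have nn: "nodes_term (Node s cs) = [] # concat (map (\<lambda>k. map (Cons k) (N k)) [0..<length cs])"
    unfolding N_def by (rule nodes_Node)
  show ?case
  proof (cases "[] \<in> S")
    case False
    then have S0: "S = {}" using upc_empty[OF Node.prems] by blast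
    have "filter P (concat (map (\<lambda>k. map (Cons k) (N k)) [0..<length cs])) = []"
      unfolding filter_empty_conv P_def S0 by auto
    then have "filter P (nodes_term (Node s cs)) = [[]]" unfolding nn using S0 P_def by simp
    then show ?thesis using False unfolding P_def[symmetric] by (simp add: rd_def)
  next
    case True
    have IH: "\<And>k. k < length cs \<Longrightarrow> rd (lower (cs!k) {q. k#q \<in> S}) =
       map (subtree (cs!k)) (filter (\<lambda>q. q \<notin> {q. k#q \<in> S} \<and> (q = [] \<or> butlast q \<in> {q. k#q \<in> S})) (N k))"
      unfolding N_def using Node.IH upc_shift[OF Node.prems] by simp
    have "rd (lower (Node s cs) S) = concat (map (\<lambda>k. rd (lower (cs!k) {q. k#q \<in> S})) [0..<length cs])"
      using True by (simp add: rd_concat comp_def)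
    also have "\<dots> = concat (map (\<lambda>k. map (subtree (Node s cs)) (filter P (map (Cons k) (N k)))) [0..<length cs])"
    proof (intro arg_cong[where f=concat] map_cong refl)
      fix k assume k: "k \<in> set [0..<length cs]"
      have "filter P (map (Cons k) (N k)) = map (Cons k) (filter (P \<circ> Cons k) (N k))"
        by (simp add: filter_map)
      also have "filter (P \<circ> Cons k) (N k) =
          filter (\<lambda>q. q \<notin> {q. k#q \<in> S} \<and> (q = [] \<or> butlast q \<in> {q. k#q \<in> S})) (N k)"
        unfolding P_def comp_def using butlast_Cons_iff[OF True] by presburger
      finally show "rd (lower (cs!k) {q. k#q \<in> S}) = map (subtree (Node s cs)) (filter P (map (Cons k) (N k)))"
        using IH k by (simp add: comp_def)
    qed
    also have "\<dots> = map (subtree (Node s cs)) (filter P (concat (map (\<lambda>k. map (Cons k) (N k)) [0..<length cs])))"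
      by (simp add: filter_concat map_concat comp_def)
    also have "\<dots> = map (subtree (Node s cs)) (filter P (nodes_term (Node s cs)))"
      unfolding nn using True P_def by simp
    finally show ?thesis unfolding P_def .
  qed
qed

lemma nodes_subtree:
  "p \<in> set (nodes_term t) \<Longrightarrow> q \<in> set (nodes_term (subtree t p)) \<Longrightarrow> p @ q \<in> set (nodes_term t)"
proof (induction p arbitrary: t)
  case Nil then show ?case by simp
next
  case (Cons k p)
  then obtain s cs where t: "t = Node s cs" and k: "k < length cs" and p: "p \<in> set (nodes_term (cs!k))"
    using cons_nodes by metis
  have "q \<in> set (nodes_term (subtree (cs!k) p))" using Cons.prems t by simp
  then have "p @ q \<in> set (nodes_term (cs!k))" using Cons.IH p by blast
  then show ?case using t k cons_nodes_Node by (metis append_Cons)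
qed

definition Rt :: "'s sterm \<Rightarrow> nat list set \<Rightarrow> 's forest" where
  "Rt t S = map (\<lambda>p. restr_in (subtree t p) (\<lambda>q. p @ q \<in> S))
      (filter (\<lambda>p. p \<in> S \<and> (p = [] \<or> butlast p \<notin> S)) (nodes_term t))"

lemma butlast_mem: "upc S \<Longrightarrow> p \<in> S \<Longrightarrow> butlast p \<in> S"
  unfolding upc_def by (metis append_butlast_last_id butlast.simps(1))

lemma Rt_upper: "upc S \<Longrightarrow> Rt t S = rd [upper t S]"
proof (cases t)
  case Leaf then show ?thesis by (simp add: Rt_def rd_def)
next
  case (Node s cs)
  assume u: "upc S"
  show ?thesis
  proof (cases "[] \<in> S")
    case False
    then have "S = {}" using upc_empty[OF u] by blast
    then show ?thesis using Node by (simp add: Rt_def rd_def)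
  next
    case True
    have f: "filter (\<lambda>p. p \<in> S \<and> (p = [] \<or> butlast p \<notin> S)) (nodes_term t) = [[]]"
    proof -
      have "filter (\<lambda>p. p \<in> S \<and> (p = [] \<or> butlast p \<notin> S))
            (concat (map (\<lambda>k. map (Cons k) (nodes_term (cs!k))) [0..<length cs])) = []"
        unfolding filter_empty_conv using butlast_mem[OF u] by fastforce
      then show ?thesis unfolding Node nodes_Node using True by simp
    qed
    have "restr_in t (\<lambda>q. q \<in> S) = upper t {q. q \<in> S}" using restr_upper(1)[of "\<lambda>q. q \<in> S" t] True by (rule mp)
    then show ?thesis using f True Node by (simp add: Rt_def rd_def)
  qed
qed

lemma Rt_lower: "upc S \<Longrightarrow> S \<subseteq> set (nodes_term t) \<Longrightarrow> Rt t (set (nodes_term t) - S) = rd (lower t S)"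
proof -
  assume u: "upc S" and sub: "S \<subseteq> set (nodes_term t)"
  let ?N = "set (nodes_term t)"
  have f: "filter (\<lambda>p. p \<in> ?N - S \<and> (p = [] \<or> butlast p \<notin> ?N - S)) (nodes_term t) =
        filter (\<lambda>p. p \<notin> S \<and> (p = [] \<or> butlast p \<in> S)) (nodes_term t)"
  proof (rule filter_cong[OF refl])
    fix p assume p: "p \<in> ?N"
    have "p \<noteq> [] \<Longrightarrow> butlast p \<in> ?N" using p nodes_prefix by (metis append_butlast_last_id)
    then show "(p \<in> ?N - S \<and> (p = [] \<or> butlast p \<notin> ?N - S)) = (p \<notin> S \<and> (p = [] \<or> butlast p \<in> S))"
      using p by blast
  qed
  have m: "restr_in (subtree t p) (\<lambda>q. p @ q \<in> ?N - S) = subtree t p"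
    if p: "p \<in> set (filter (\<lambda>p. p \<notin> S \<and> (p = [] \<or> butlast p \<in> S)) (nodes_term t))" for p
  proof (rule restr_id(1), rule ballI)
    fix q assume q: "q \<in> set (nodes_term (subtree t p))"
    have "p @ q \<in> ?N" using nodes_subtree p q by auto
    moreover have "p @ q \<notin> S" using p u unfolding upc_def by auto
    ultimately show "p @ q \<in> ?N - S" by blast
  qed
  show ?thesis unfolding Rt_def f rd_lower[OF u] using m by (simp cong: map_cong)
qed



definition cnt1 :: "'s sterm \<Rightarrow> 's forest \<Rightarrow> 's forest \<Rightarrow> nat" where
  "cnt1 t u v = card {S. S \<subseteq> set (nodes_term t) \<and> upc S \<and> Rt t S = u \<and> Rt t (set (nodes_term t) - S) = v}"

lemma upc_nodes: "upc (set (nodes_term t))"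
  unfolding upc_def using nodes_prefix by blast

lemma DeltaT_cnt:
  assumes wf: "wf_term Sig ar t"
  shows "DeltaT Sig ar t (u, v) = of_nat (cnt1 t u v)"
proof -
  let ?A = "{S. S \<subseteq> set (nodes_term t) \<and> upc S \<and> Rt t S = u \<and> Rt t (set (nodes_term t) - S) = v}"
  let ?B = "{(t', ts). wf_term Sig ar t' \<and> (\<forall>x\<in>set ts. wf_term Sig ar x) \<and>
        length ts = leaves t' \<and> graft t' ts = t \<and> rd [t'] = u \<and> rd ts = v}"
  have eq: "?B = (\<lambda>S. (upper t S, lower t S)) ` ?A"
  proof (rule set_eqI)
    fix x show "x \<in> ?B \<longleftrightarrow> x \<in> (\<lambda>S. (upper t S, lower t S)) ` ?A"
    proof
      assume "x \<in> ?B"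
      then obtain t' ts where x: "x = (t', ts)" and w1: "wf_term Sig ar t'" and w2: "\<forall>x\<in>set ts. wf_term Sig ar x"
        and l: "length ts = leaves t'" and g: "graft t' ts = t" and r1: "rd [t'] = u" and r2: "rd ts = v"
        by blast
      let ?S = "set (nodes_term t')"
      have su: "upper t ?S = t'" "lower t ?S = ts" "?S \<subseteq> set (nodes_term t)"
        using upper_lower_surj[OF l g] by blast+
      have "?S \<in> ?A"
        using su r1 r2 Rt_upper[OF upc_nodes, of t t'] Rt_lower[OF upc_nodes su(3)] upc_nodes by simp
      then show "x \<in> (\<lambda>S. (upper t S, lower t S)) ` ?A" using x su by force
    next
      assume "x \<in> (\<lambda>S. (upper t S, lower t S)) ` ?A"
      then obtain S where x: "x = (upper t S, lower t S)" and S: "S \<in> ?A" by blast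
      have u1: "upc S" and s1: "S \<subseteq> set (nodes_term t)" using S by auto
      have "rd [upper t S] = u" using S Rt_upper[OF u1, of t] by simp
      moreover have "rd (lower t S) = v" using S Rt_lower[OF u1 s1] by simp
      ultimately show "x \<in> ?B" using x wf_upper_lower[OF wf, of S] upper_lower_graft[of t S] by auto
    qed
  qed
  have inj: "inj_on (\<lambda>S. (upper t S, lower t S)) ?A"
  proof (rule inj_onI)
    fix S S' assume "S \<in> ?A" "S' \<in> ?A" "(upper t S, lower t S) = (upper t S', lower t S')"
    then show "S = S'" using nodes_upper by (metis (no_types, lifting) mem_Collect_eq prod.inject)
  qed
  have "DeltaT Sig ar t (u, v) = of_nat (card ?B)" unfolding DeltaT_def by simp
  also have "\<dots> = of_nat (card ?A)" unfolding eq using card_image[OF inj] by simp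
  finally show ?thesis unfolding cnt1_def .
qed



definition NF :: "'s forest \<Rightarrow> (nat \<times> nat list) set" where
  "NF f = set (forest_nodes f)"

definition R :: "'s forest \<Rightarrow> (nat \<times> nat list) set \<Rightarrow> 's forest" where
  "R f X = map (\<lambda>(i, p). restr_in (subtree (f ! i) p) (\<lambda>q. (i, p @ q) \<in> X))
       (filter (\<lambda>(i, p). (i, p) \<in> X \<and> (p = [] \<or> (i, butlast p) \<notin> X)) (forest_nodes f))"

definition upcl :: "(nat \<times> nat list) set \<Rightarrow> bool" where
  "upcl X \<longleftrightarrow> (\<forall>i p r. (i, p @ r) \<in> X \<longrightarrow> (i, p) \<in> X)"

definition cnt :: "'s forest \<Rightarrow> 's forest \<Rightarrow> 's forest \<Rightarrow> nat" where
  "cnt f u v = card {X. X \<subseteq> NF f \<and> upcl X \<and> R f X = u \<and> R f (NF f - X) = v}"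

definition sl0 :: "(nat \<times> nat list) set \<Rightarrow> nat list set" where
  "sl0 X = {p. (0, p) \<in> X}"

definition slS :: "(nat \<times> nat list) set \<Rightarrow> (nat \<times> nat list) set" where
  "slS X = {(i, p). (Suc i, p) \<in> X}"

definition apS :: "nat \<times> nat list \<Rightarrow> nat \<times> nat list" where
  "apS x = (Suc (fst x), snd x)"

lemma forest_nodes_Nil: "forest_nodes [] = []"
  by (simp add: forest_nodes_def)

lemma forest_nodes_Cons:
  "forest_nodes (t # g) = map (Pair 0) (nodes_term t) @ map apS (forest_nodes g)"
  unfolding forest_nodes_def by (simp add: upt0_Suc map_concat comp_def apS_def del: upt_Suc)

lemma R_Cons: "R (t # g) X = Rt t (sl0 X) @ R g (slS X)"
  unfolding R_def Rt_def forest_nodes_Cons sl0_def slS_def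
  by (simp add: filter_map comp_def apS_def case_prod_unfold)

lemma NF_Cons: "NF (t # g) = Pair 0 ` set (nodes_term t) \<union> apS ` NF g"
  unfolding NF_def forest_nodes_Cons by simp

lemma sl0_NF: "sl0 (NF (t # g)) = set (nodes_term t)"
  unfolding NF_Cons sl0_def apS_def by auto

lemma slS_NF: "slS (NF (t # g)) = NF g"
  unfolding NF_Cons slS_def apS_def by force

lemma sl0_diff: "sl0 (A - B) = sl0 A - sl0 B" unfolding sl0_def by auto
lemma slS_diff: "slS (A - B) = slS A - slS B" unfolding slS_def by auto

lemma recon: "X = Pair 0 ` sl0 X \<union> apS ` slS X"
proof (rule set_eqI)
  fix x show "x \<in> X \<longleftrightarrow> x \<in> Pair 0 ` sl0 X \<union> apS ` slS X"
  proof (cases x)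
    case (Pair i p) then show ?thesis
      by (cases i) (auto simp: sl0_def slS_def apS_def image_iff)
  qed
qed

lemma sl0_recon: "sl0 (Pair 0 ` S \<union> apS ` Y) = S" unfolding sl0_def apS_def by auto
lemma slS_recon: "slS (Pair 0 ` S \<union> apS ` Y) = Y" unfolding slS_def apS_def by force

lemma upcl_split: "upcl X \<longleftrightarrow> upc (sl0 X) \<and> upcl (slS X)"
proof
  assume "upcl X" then show "upc (sl0 X) \<and> upcl (slS X)"
    unfolding upcl_def upc_def sl0_def slS_def by auto
next
  assume a: "upc (sl0 X) \<and> upcl (slS X)"
  show "upcl X" unfolding upcl_def
  proof (intro allI impI)
    fix i p r assume "(i, p @ r) \<in> X"
    then show "(i, p) \<in> X" using a unfolding upcl_def upc_def sl0_def slS_def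
      by (cases i) blast+
  qed
qed

lemma finite_NF: "finite (NF f)" unfolding NF_def by simp

lemma conv_card:
  fixes A :: "'a set" and B :: "'b set"
  assumes fA: "finite A" and fB: "finite B"
  shows "card {(a, b). a \<in> A \<and> b \<in> B \<and> g a @ h b = u \<and> g' a @ h' b = v} =
    (\<Sum>i\<le>length u. \<Sum>j\<le>length v. card {a\<in>A. g a = take i u \<and> g' a = take j v} *
        card {b\<in>B. h b = drop i u \<and> h' b = drop j v})"
proof -
  define F where "F = (\<lambda>(i, j). {a\<in>A. g a = take i u \<and> g' a = take j v} \<times>
        {b\<in>B. h b = drop i u \<and> h' b = drop j v})"
  let ?I = "{..length u} \<times> {..length v}"
  have eq: "{(a, b). a \<in> A \<and> b \<in> B \<and> g a @ h b = u \<and> g' a @ h' b = v} = (\<Union>x\<in>?I. F x)"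
  proof (rule set_eqI)
    fix x show "x \<in> {(a, b). a \<in> A \<and> b \<in> B \<and> g a @ h b = u \<and> g' a @ h' b = v} \<longleftrightarrow> x \<in> (\<Union>x\<in>?I. F x)"
    proof (cases x)
      case (Pair a b)
      have "(a \<in> A \<and> b \<in> B \<and> g a @ h b = u \<and> g' a @ h' b = v) \<longleftrightarrow>
            (\<exists>i\<le>length u. \<exists>j\<le>length v. (a, b) \<in> F (i, j))"
      proof
        assume H: "a \<in> A \<and> b \<in> B \<and> g a @ h b = u \<and> g' a @ h' b = v"
        then have "length (g a) \<le> length u" "length (g' a) \<le> length v" by auto
        moreover have "(a, b) \<in> F (length (g a), length (g' a))"
          using H unfolding F_def by (auto simp: append_eq_conv_conj)
        ultimately show "\<exists>i\<le>length u. \<exists>j\<le>length v. (a, b) \<in> F (i, j)" by blast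
      next
        assume "\<exists>i\<le>length u. \<exists>j\<le>length v. (a, b) \<in> F (i, j)"
        then obtain i j where "(a, b) \<in> F (i, j)" by blast
        then show "a \<in> A \<and> b \<in> B \<and> g a @ h b = u \<and> g' a @ h' b = v"
          unfolding F_def by auto
      qed
      then show ?thesis using Pair by auto
    qed
  qed
  have fin: "\<And>x. x \<in> ?I \<Longrightarrow> finite (F x)" unfolding F_def using fA fB by (auto split: prod.splits)
  have disj: "\<forall>x\<in>?I. \<forall>y\<in>?I. x \<noteq> y \<longrightarrow> F x \<inter> F y = {}"
  proof (intro ballI impI)
    fix x y assume x: "x \<in> ?I" and y: "y \<in> ?I" and ne: "x \<noteq> y"
    obtain i j where xi: "x = (i, j)" by (cases x)
    obtain i' j' where yi: "y = (i', j')" by (cases y)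
    show "F x \<inter> F y = {}"
    proof (rule ccontr)
      assume "F x \<inter> F y \<noteq> {}"
      then obtain a b where "(a, b) \<in> F x" "(a, b) \<in> F y" by auto
      then have "take i u = take i' u" "take j v = take j' v" unfolding F_def xi yi by auto
      then have "i = i'" "j = j'" using x y xi yi by (auto dest: arg_cong[where f=length])
      then show False using ne xi yi by simp
    qed
  qed
  have "card (\<Union>x\<in>?I. F x) = (\<Sum>x\<in>?I. card (F x))"
    by (rule card_UN_disjoint) (use fin disj in auto)
  also have "\<dots> = (\<Sum>i\<le>length u. \<Sum>j\<le>length v. card (F (i, j)))"
    by (simp add: sum.cartesian_product)
  also have "\<dots> = (\<Sum>i\<le>length u. \<Sum>j\<le>length v. card {a\<in>A. g a = take i u \<and> g' a = take j v} *
        card {b\<in>B. h b = drop i u \<and> h' b = drop j v})"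
    unfolding F_def by (simp add: card_cartesian_product)
  finally show ?thesis using eq by simp
qed



lemma sl0_mono: "X \<subseteq> Y \<Longrightarrow> sl0 X \<subseteq> sl0 Y" unfolding sl0_def by auto
lemma slS_mono: "X \<subseteq> Y \<Longrightarrow> slS X \<subseteq> slS Y" unfolding slS_def by auto

lemma cnt_Cons:
  "cnt (t # g) u v = (\<Sum>i\<le>length u. \<Sum>j\<le>length v. cnt1 t (take i u) (take j v) * cnt g (drop i u) (drop j v))"
proof -
  let ?P = "set (nodes_term t)"
  let ?A = "{S. S \<subseteq> ?P \<and> upc S}"
  let ?B = "{Y. Y \<subseteq> NF g \<and> upcl Y}"
  let ?XS = "{X. X \<subseteq> NF (t # g) \<and> upcl X \<and> R (t # g) X = u \<and> R (t # g) (NF (t # g) - X) = v}"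
  let ?PS = "{(a, b). a \<in> ?A \<and> b \<in> ?B \<and> Rt t a @ R g b = u \<and> (\<lambda>a. Rt t (?P - a)) a @ (\<lambda>b. R g (NF g - b)) b = v}"
  have bij: "bij_betw (\<lambda>X. (sl0 X, slS X)) ?XS ?PS"
  proof (rule bij_betw_byWitness[where f'="\<lambda>(S, Y). Pair 0 ` S \<union> apS ` Y"])
    show "\<forall>a\<in>?XS. (\<lambda>(S, Y). Pair 0 ` S \<union> apS ` Y) (sl0 a, slS a) = a"
      using recon by auto
    show "\<forall>a'\<in>?PS. (\<lambda>X. (sl0 X, slS X)) ((\<lambda>(S, Y). Pair 0 ` S \<union> apS ` Y) a') = a'"
      using sl0_recon slS_recon by auto
    show "(\<lambda>X. (sl0 X, slS X)) ` ?XS \<subseteq> ?PS"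
    proof
      fix x assume "x \<in> (\<lambda>X. (sl0 X, slS X)) ` ?XS"
      then obtain X where x: "x = (sl0 X, slS X)" and X: "X \<in> ?XS" by blast
      have s1: "sl0 X \<subseteq> ?P" using X sl0_mono[of X "NF (t#g)"] sl0_NF by auto
      have s2: "slS X \<subseteq> NF g" using X slS_mono[of X "NF (t#g)"] slS_NF by auto
      have "upcl X" using X by blast
      then have u: "upc (sl0 X)" "upcl (slS X)" using upcl_split[of X] by blast+
      have "R (t # g) X = u" using X by blast
      then have r1: "Rt t (sl0 X) @ R g (slS X) = u" by (simp only: R_Cons)
      have "R (t # g) (NF (t # g) - X) = v" using X by blast
      then have r2: "Rt t (?P - sl0 X) @ R g (NF g - slS X) = v"
        by (simp only: R_Cons sl0_diff slS_diff sl0_NF slS_NF)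
      show "x \<in> ?PS" using x s1 s2 u r1 r2 by auto
    qed
    show "(\<lambda>(S, Y). Pair 0 ` S \<union> apS ` Y) ` ?PS \<subseteq> ?XS"
    proof
      fix x assume "x \<in> (\<lambda>(S, Y). Pair 0 ` S \<union> apS ` Y) ` ?PS"
      then obtain S Y where x: "x = Pair 0 ` S \<union> apS ` Y" and SY: "(S, Y) \<in> ?PS" by auto
      have 0: "sl0 x = S" "slS x = Y" using x sl0_recon slS_recon by auto
      have "S \<subseteq> ?P" "Y \<subseteq> NF g" using SY by auto
      then have s: "x \<subseteq> NF (t # g)" unfolding x NF_Cons by (intro Un_mono image_mono)
      have "upc S" "upcl Y" using SY by auto
      then have u: "upcl x" using upcl_split[of x] 0 by simp
      have r1: "R (t # g) x = u" using R_Cons 0 SY by auto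
      have r2: "R (t # g) (NF (t # g) - x) = v"
        using SY by (simp only: R_Cons sl0_diff slS_diff sl0_NF slS_NF 0) auto
      show "x \<in> ?XS" using s u r1 r2 by auto
    qed
  qed
  have fA: "finite ?A" by simp
  have fB: "finite ?B" by (rule finite_subset[of _ "Pow (NF g)"]) (auto simp: finite_NF)
  have "cnt (t # g) u v = card ?XS" unfolding cnt_def by simp
  also have "\<dots> = card ?PS" using bij_betw_same_card[OF bij] .
  also have "\<dots> = (\<Sum>i\<le>length u. \<Sum>j\<le>length v. card {a\<in>?A. Rt t a = take i u \<and> Rt t (?P - a) = take j v} *
        card {b\<in>?B. R g b = drop i u \<and> R g (NF g - b) = drop j v})"
    by (rule conv_card[OF fA fB])
  also have "\<dots> = (\<Sum>i\<le>length u. \<Sum>j\<le>length v. cnt1 t (take i u) (take j v) * cnt g (drop i u) (drop j v))"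
    unfolding cnt1_def cnt_def by (intro sum.cong refl arg_cong2[where f="(*)"] arg_cong[where f=card]) auto
  finally show ?thesis .
qed

lemma Delta_cnt:
  "(\<forall>t\<in>set f. wf_term Sig ar t) \<Longrightarrow>
   (Delta Sig ar f :: ('s, 'k::comm_semiring_1) tensor) = (\<lambda>(u, v). of_nat (cnt f u v))"
proof (induction f)
  case Nil
  have "cnt [] u v = (if u = [] \<and> v = [] then 1 else 0)" for u v :: "'s forest"
  proof -
    have "{X. X \<subseteq> NF ([] :: 's forest) \<and> upcl X \<and> R [] X = u \<and> R [] (NF [] - X) = v} =
          (if u = [] \<and> v = [] then {{}} else {})"
      unfolding NF_def R_def forest_nodes_Nil by (auto simp: upcl_def)
    note e = this
    show ?thesis unfolding cnt_def e by simp
  qed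
  then show ?case unfolding Delta_def tone_def tbasis_def by (auto simp: fun_eq_iff)
next
  case (Cons t g)
  have wt: "wf_term Sig ar t" and IH: "(Delta Sig ar g :: ('s, 'k) tensor) = (\<lambda>(u, v). of_nat (cnt g u v))"
    using Cons.prems Cons.IH by simp_all
  have main: "(Delta Sig ar (t # g) :: ('s, 'k) tensor) (u, v) = of_nat (cnt (t # g) u v)" for u v :: "'s forest"
  proof -
    have "(Delta Sig ar (t # g) :: ('s, 'k) tensor) (u, v) = (tmul (DeltaT Sig ar t) (Delta Sig ar g) :: ('s, 'k) tensor) (u, v)"
      unfolding Delta_def by simp
    also have "\<dots> = (\<Sum>i\<le>length u. \<Sum>j\<le>length v. of_nat (cnt1 t (take i u) (take j v)) * of_nat (cnt g (drop i u) (drop j v)))"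
      unfolding tmul_def IH by (simp add: DeltaT_cnt[OF wt])
    also have "\<dots> = of_nat (cnt (t # g) u v)"
      unfolding cnt_Cons by simp
    finally show ?thesis .
  qed
  show ?case by (intro ext) (auto simp: main split: prod.splits)
qed



definition idx :: "'s forest \<Rightarrow> nat \<Rightarrow> nat \<times> nat list" where
  "idx f k = forest_nodes f ! (k - 1)"

lemma NF_mem: "(i, p) \<in> NF f \<longleftrightarrow> i < length f \<and> p \<in> set (nodes_term (f ! i))"
  unfolding NF_def forest_nodes_def by auto

lemma NF_prefix: "(i, p @ r) \<in> NF f \<Longrightarrow> (i, p) \<in> NF f"
  unfolding NF_mem using nodes_prefix by blast

lemma distinct_forest_nodes: "distinct (forest_nodes f)"
  unfolding forest_nodes_def
  by (rule distinct_concat_map) (auto simp: distinct_map distinct_nodes inj_on_def)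

lemma bij_nth1:
  assumes "distinct xs"
  shows "bij_betw (\<lambda>k. xs ! (k - 1)) {1..length xs} (set xs)"
proof (rule bij_betwI')
  fix k k' assume k: "k \<in> {1..length xs}" and k': "k' \<in> {1..length xs}"
  have l: "k - 1 < length xs" "k' - 1 < length xs" using k k' by auto
  have "(xs ! (k - 1) = xs ! (k' - 1)) = (k - 1 = k' - 1)" using nth_eq_iff_index_eq[OF assms l] .
  then show "(xs ! (k - 1) = xs ! (k' - 1)) = (k = k')" using k k' by auto
next
  fix k assume "k \<in> {1..length xs}" then show "xs ! (k - 1) \<in> set xs" by auto
next
  fix y assume "y \<in> set xs"
  then obtain i where "i < length xs" "y = xs ! i" by (metis in_set_conv_nth)
  then show "\<exists>k\<in>{1..length xs}. y = xs ! (k - 1)" by (intro bexI[of _ "Suc i"]) auto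
qed

lemma bij_idx: "bij_betw (idx f) {1..deg f} (NF f)"
  unfolding idx_def deg_def NF_def using bij_nth1[OF distinct_forest_nodes] .

lemma node_num_idx: "node_num f k x \<longleftrightarrow> k \<in> {1..deg f} \<and> idx f k = x"
  unfolding node_num_def idx_def by auto

lemma kept_idx: "I \<subseteq> {1..deg f} \<Longrightarrow> kept f I = (\<lambda>x. x \<in> idx f ` I)"
  unfolding kept_def node_num_idx by (rule ext) (unfold image_iff, blast)

lemma restr_R: "I \<subseteq> {1..deg f} \<Longrightarrow> restr f I = R f (idx f ` I)"
  unfolding restr_def R_def kept_idx by simp

lemma ancestor_idx: "ancestor f a b \<longleftrightarrow>
   (\<exists>i p r. a \<in> {1..deg f} \<and> b \<in> {1..deg f} \<and> idx f a = (i, p) \<and> idx f b = (i, p @ r) \<and> r \<noteq> [])"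
  unfolding ancestor_def node_num_idx by blast

lemma adm_iff:
  assumes I1: "I1 \<subseteq> {1..deg f}" and I2: "I2 \<subseteq> {1..deg f}"
  shows "admissible f I1 I2 \<longleftrightarrow> I2 = {1..deg f} - I1 \<and> upcl (idx f ` I1)"
proof -
  let ?D = "{1..deg f}"
  have inj: "inj_on (idx f) ?D" and im: "idx f ` ?D = NF f" using bij_idx[of f] by (auto simp: bij_betw_def)
  have c3: "(\<forall>a b. b \<in> I1 \<and> ancestor f a b \<longrightarrow> a \<in> I1) \<longleftrightarrow> upcl (idx f ` I1)"
  proof
    assume H: "\<forall>a b. b \<in> I1 \<and> ancestor f a b \<longrightarrow> a \<in> I1"
    show "upcl (idx f ` I1)" unfolding upcl_def
    proof (intro allI impI)
      fix i p r assume "(i, p @ r) \<in> idx f ` I1"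
      then obtain b where b: "b \<in> I1" "idx f b = (i, p @ r)" by auto
      show "(i, p) \<in> idx f ` I1"
      proof (cases "r = []")
        case True then show ?thesis using b by (metis append_Nil2 image_eqI)
      next
        case False
        have "(i, p @ r) \<in> NF f" using b I1 im by (metis imageI subsetD)
        then have "(i, p) \<in> NF f" by (rule NF_prefix)
        then obtain a where a: "a \<in> ?D" "idx f a = (i, p)" using im by (metis imageE)
        have "ancestor f a b" unfolding ancestor_idx using a b I1 False by blast
        then have "a \<in> I1" using H b by blast
        then show ?thesis using a(2) by (metis imageI)
      qed
    qed
  next
    assume U: "upcl (idx f ` I1)"
    show "\<forall>a b. b \<in> I1 \<and> ancestor f a b \<longrightarrow> a \<in> I1"
    proof (intro allI impI)
      fix a b assume ab: "b \<in> I1 \<and> ancestor f a b"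
      then obtain i p r where h: "a \<in> ?D" "b \<in> ?D" "idx f a = (i, p)" "idx f b = (i, p @ r)"
        unfolding ancestor_idx by blast
      have "(i, p @ r) \<in> idx f ` I1" using ab h by (metis imageI)
      then have "(i, p) \<in> idx f ` I1" using U unfolding upcl_def by blast
      then obtain a' where "a' \<in> I1" "idx f a' = idx f a" using h by auto
      then show "a \<in> I1" using inj h I1 by (metis inj_onD subsetD)
    qed
  qed
  show ?thesis
  proof
    assume "admissible f I1 I2"
    then show "I2 = ?D - I1 \<and> upcl (idx f ` I1)" unfolding admissible_def c3[symmetric] by blast
  next
    assume H: "I2 = ?D - I1 \<and> upcl (idx f ` I1)"
    then have h3: "\<forall>a b. b \<in> I1 \<and> ancestor f a b \<longrightarrow> a \<in> I1" using c3 by blast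
    have h4: "\<forall>a b. a \<in> I2 \<and> ancestor f a b \<longrightarrow> b \<in> I2"
    proof (intro allI impI)
      fix a b assume ab: "a \<in> I2 \<and> ancestor f a b"
      then have "b \<in> ?D" unfolding ancestor_idx by blast
      show "b \<in> I2"
      proof (rule ccontr)
        assume "b \<notin> I2"
        then have "b \<in> I1" using \<open>b \<in> ?D\<close> H by blast
        then have "a \<in> I1" using h3 ab by blast
        then show False using ab H by blast
      qed
    qed
    show "admissible f I1 I2" unfolding admissible_def using H I1 h3 h4 by blast
  qed
qed

lemma sum_indicator:
  "finite A \<Longrightarrow> (\<Sum>x\<in>A. if P x then (1::'a::comm_semiring_1) else 0) = of_nat (card {x\<in>A. P x})"
  by (simp add: sum.inter_filter[symmetric])

lemma RHS_cnt:
  "(\<Sum>(I1, I2)\<in>Pow {1..deg f} \<times> Pow {1..deg f}.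
          (if admissible f I1 I2 then 1 else 0) * tbasis (restr f I1) (restr f I2) (u, v)) =
   (of_nat (cnt f u v) :: 'a::comm_semiring_1)"
proof -
  let ?D = "{1..deg f}"
  let ?Q = "\<lambda>(I1, I2). admissible f I1 I2 \<and> restr f I1 = u \<and> restr f I2 = v"
  let ?T = "{x \<in> Pow ?D \<times> Pow ?D. ?Q x}"
  let ?XS = "{X. X \<subseteq> NF f \<and> upcl X \<and> R f X = u \<and> R f (NF f - X) = v}"
  have inj: "inj_on (idx f) ?D" and im: "idx f ` ?D = NF f" using bij_idx[of f] by (auto simp: bij_betw_def)
  have "(\<Sum>(I1, I2)\<in>Pow ?D \<times> Pow ?D.
          (if admissible f I1 I2 then 1 else 0) * tbasis (restr f I1) (restr f I2) (u, v)) =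
        (\<Sum>x\<in>Pow ?D \<times> Pow ?D. if ?Q x then (1::'a) else 0)"
    by (intro sum.cong refl) (simp add: tbasis_def split_def)
  also have "\<dots> = of_nat (card ?T)" by (rule sum_indicator) simp
  also have "card ?T = card ?XS"
  proof -
    have injT: "inj_on (\<lambda>(I1, I2). idx f ` I1) ?T"
    proof (rule inj_onI)
      fix x y assume a0: "x \<in> ?T" "y \<in> ?T" "(\<lambda>(I1, I2). idx f ` I1) x = (\<lambda>(I1, I2). idx f ` I1) y"
      obtain I1 I2 where x: "x = (I1, I2)" by (cases x)
      obtain J1 J2 where y: "y = (J1, J2)" by (cases y)
      have a: "(I1, I2) \<in> ?T" "(J1, J2) \<in> ?T" "idx f ` I1 = idx f ` J1" using a0 x y by auto
      have s: "I1 \<subseteq> ?D" "I2 \<subseteq> ?D" "J1 \<subseteq> ?D" "J2 \<subseteq> ?D" using a by auto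
      have "I1 = J1" using a(3) inj s by (simp add: inj_on_image_eq_iff)
      moreover have "I2 = ?D - I1" "J2 = ?D - J1" using a adm_iff[OF s(1,2)] adm_iff[OF s(3,4)] by auto
      ultimately show "x = y" using x y by simp
    qed
    have imT: "(\<lambda>(I1, I2). idx f ` I1) ` ?T = ?XS"
    proof (rule set_eqI, rule iffI)
      fix X assume "X \<in> (\<lambda>(I1, I2). idx f ` I1) ` ?T"
      then obtain I1 I2 where X: "X = idx f ` I1" and T: "(I1, I2) \<in> ?T" by auto
      have s: "I1 \<subseteq> ?D" "I2 \<subseteq> ?D" using T by auto
      have I2: "I2 = ?D - I1" and U: "upcl X" using T adm_iff[OF s] X by auto
      have "idx f ` (?D - I1) = idx f ` ?D - idx f ` I1" by (rule inj_on_image_set_diff[OF inj]) (use s in auto)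
      then have d: "idx f ` I2 = NF f - X" unfolding I2 X im .
      have "X \<subseteq> NF f" unfolding X using s(1) im by blast
      moreover have "R f X = u" using T restr_R[OF s(1)] X by simp
      moreover have "R f (NF f - X) = v" using T restr_R[OF s(2)] d by simp
      ultimately show "X \<in> ?XS" using U by blast
    next
      fix X assume X: "X \<in> ?XS"
      define I1 where "I1 = {k \<in> ?D. idx f k \<in> X}"
      have s1: "I1 \<subseteq> ?D" unfolding I1_def by auto
      have XI: "idx f ` I1 = X"
      proof
        show "idx f ` I1 \<subseteq> X" unfolding I1_def by blast
        show "X \<subseteq> idx f ` I1"
        proof
          fix x assume "x \<in> X"
          then have "x \<in> idx f ` ?D" using X im by blast
          then obtain k where "k \<in> ?D" "x = idx f k" by blast
          then show "x \<in> idx f ` I1" unfolding I1_def using \<open>x \<in> X\<close> by blast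
        qed
      qed
      have s2: "?D - I1 \<subseteq> ?D" by auto
      have "idx f ` (?D - I1) = idx f ` ?D - idx f ` I1" by (rule inj_on_image_set_diff[OF inj]) (use s1 in auto)
      then have d: "idx f ` (?D - I1) = NF f - X" unfolding XI im .
      have "(I1, ?D - I1) \<in> ?T"
        using adm_iff[OF s1 s2] XI X d restr_R[OF s1] restr_R[OF s2] s1 by auto
      then have "(\<lambda>(I1, I2). idx f ` I1) (I1, ?D - I1) \<in> (\<lambda>(I1, I2). idx f ` I1) ` ?T" by (rule imageI)
      then show "X \<in> (\<lambda>(I1, I2). idx f ` I1) ` ?T" using XI by simp
    qed
    show ?thesis using card_image[OF injT] imT by simp
  qed
  finally show ?thesis unfolding cnt_def by simp
qed


theorem proposition3p3:
  fixes Sig :: "'s set" and ar :: "'s \<Rightarrow> nat" and f :: "'s forest"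
  assumes "reduced f" and "\<forall>t\<in>set f. wf_term Sig ar t"
  shows "(Delta Sig ar f :: ('s, 'k::field_char_0) tensor) =
    (\<lambda>x. \<Sum>(I1, I2)\<in>Pow {1..deg f} \<times> Pow {1..deg f}.
          (if admissible f I1 I2 then 1 else 0) * tbasis (restr f I1) (restr f I2) x)"
proof (rule ext)
  fix x :: "'s forest \<times> 's forest"
  obtain u v where x: "x = (u, v)" by (cases x)
  have "(Delta Sig ar f :: ('s, 'k) tensor) x = of_nat (cnt f u v)"
    using x by (simp add: Delta_cnt[OF assms(2)])
  also have "\<dots> = (\<Sum>(I1, I2)\<in>Pow {1..deg f} \<times> Pow {1..deg f}.
          (if admissible f I1 I2 then 1 else 0) * tbasis (restr f I1) (restr f I2) (u, v))"
    by (rule RHS_cnt[symmetric])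
  finally show "(Delta Sig ar f :: ('s, 'k) tensor) x = (\<Sum>(I1, I2)\<in>Pow {1..deg f} \<times> Pow {1..deg f}.
          (if admissible f I1 I2 then 1 else 0) * tbasis (restr f I1) (restr f I2) x)"
    using x by simp
qed

end
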